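(* Let $Z_{1:n}$ be the minimum of an i.i.d. sample of size $n$ from $\mathcal N(0,1)$. For $\theta\in(0,\pi/2)$ let $c_1=\tfrac12-\tfrac{\theta}{\pi}$, $c_2=\tfrac{\cot\theta}{\pi-2\theta}$, and let $\widehat Z_{1:n}\sim\mathcal N(\mu_n,\sigma_n^2)$ with $$\mu_n=-\sqrt{\frac{\log(nc_1)}{c_2}},\qquad \sigma_n^2=\frac{-\log\log 2}{2c_2\big(\log(nc_1)-\log\log 2\big)}.$$ Then there exists an integer $n^*(\theta)$ such that for all $n\ge n^*(\theta)$, $Z_{1:n}\preceq_{\mathrm{st}}\widehat Z_{1:n}$, i.e. $\Pr(Z_{1:n}\ge z)\le\Pr(\widehat Z_{1:n}\ge z)$ for all $z\in\mathbb R$.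
   Context: $\log$ denotes the natural logarithm. For real random variables, $A\preceq_{\mathrm{st}}B$ means $\Pr(A\ge z)\le\Pr(B\ge z)$ for all $z\in\mathbb R$. *)

theory Defs
  imports "HOL-Probability.Probability"
begin

definition c1 :: "real \<Rightarrow> real" where
  "c1 \<theta> = 1/2 - \<theta> / pi"

definition c2 :: "real \<Rightarrow> real" where
  "c2 \<theta> = cot \<theta> / (pi - 2 * \<theta>)"

definition mu_n :: "real \<Rightarrow> nat \<Rightarrow> real" where
  "mu_n \<theta> n = - sqrt (ln (real n * c1 \<theta>) / c2 \<theta>)"

definition sigma2_n :: "real \<Rightarrow> nat \<Rightarrow> real" where
  "sigma2_n \<theta> n = - ln (ln 2) / (2 * c2 \<theta> * (ln (real n * c1 \<theta>) - ln (ln 2)))"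

end

theory Submission
  imports Defs "HOL-Real_Asymp.Real_Asymp"
begin


lemma nd_scale:
  assumes "(sg::real) > 0"
  shows "normal_density m sg x = std_normal_density ((x - m)/sg) / sg"
proof -
  have "sqrt (2 * pi * sg\<^sup>2) = sqrt (2*pi) * sg" using assms by (simp add: real_sqrt_mult)
  moreover have "(x - m)\<^sup>2 / (2 * sg\<^sup>2) = ((x - m)/sg)\<^sup>2/2" using assms by (simp add: power_divide)
  ultimately show ?thesis unfolding normal_density_def using assms by simp
qed

lemma std_nd_anti:
  assumes "\<bar>x\<bar> \<le> \<bar>y\<bar>"
  shows "std_normal_density y \<le> std_normal_density x"
proof -
  have "x\<^sup>2 \<le> y\<^sup>2" using assms by (metis abs_le_square_iff)
  then show ?thesis unfolding std_normal_density_def by (simp add: divide_right_mono)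
qed

lemma std_nd_le: "std_normal_density x \<le> exp (- x\<^sup>2/2)"
proof -
  have "1 \<le> sqrt (2*pi)" using pi_gt3 by simp
  then show ?thesis unfolding std_normal_density_def
    by (simp add: divide_le_eq_1 field_simps)
qed

lemma std_nd_half: "std_normal_density x \<le> 1/2"
proof -
  have "2 \<le> sqrt (2*pi)" using pi_gt3 by (simp add: real_le_rsqrt)
  moreover have "exp (- x\<^sup>2/2) \<le> 1" by simp
  moreover have "1 / sqrt (2*pi) \<le> 1/2" using calculation(1) by (simp add: frac_le)
  ultimately have "(1 / sqrt (2*pi)) * exp (- x\<^sup>2/2) \<le> 1/2 * 1"
    by (intro mult_mono) auto
  then show ?thesis unfolding std_normal_density_def by simp
qed

lemma ln_sqrt2pi: "ln (sqrt (2*pi)) \<le> 4"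
proof -
  have "ln (sqrt (2*pi)) \<le> sqrt (2*pi) - 1" by (rule ln_le_minus_one) (simp add: pi_gt_zero)
  moreover have "sqrt (2*pi) \<le> 5" using pi_less_4 by (simp add: real_sqrt_le_iff real_le_lsqrt)
  ultimately show ?thesis by simp
qed

lemma exp_le_std_nd:
  assumes "y \<ge> w\<^sup>2/2 + 4"
  shows "exp (-y) \<le> std_normal_density w"
proof -
  have "exp (-y) = exp (- w\<^sup>2/2) / exp (y - w\<^sup>2/2)" by (simp add: exp_diff[symmetric])
  also have "\<dots> \<le> exp (- w\<^sup>2/2) / sqrt (2*pi)"
  proof (rule divide_left_mono)
    have "sqrt (2*pi) = exp (ln (sqrt (2*pi)))" by (simp add: pi_gt_zero)
    also have "\<dots> \<le> exp (y - w\<^sup>2/2)" using ln_sqrt2pi assms by (subst exp_le_cancel_iff) linarith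
    finally show "sqrt (2*pi) \<le> exp (y - w\<^sup>2/2)" .
  qed (auto simp: pi_gt_zero)
  finally show ?thesis unfolding std_normal_density_def by simp
qed




lemma nd_deriv:
  assumes "(sg::real) > 0"
  shows "DERIV (normal_density m sg) x :> - (x - m) / sg\<^sup>2 * normal_density m sg x"
proof -
  have "DERIV (\<lambda>x. exp (-(x - m)\<^sup>2 / (2 * sg\<^sup>2))) x :> exp (-(x - m)\<^sup>2 / (2 * sg\<^sup>2)) * (- (x - m) / sg\<^sup>2)"
    using assms by (auto intro!: derivative_eq_intros simp: field_simps power2_eq_square)
  from DERIV_cmult[OF this, of "1 / sqrt (2 * pi * sg\<^sup>2)"]
  show ?thesis unfolding normal_density_def[abs_def] by (simp add: ac_simps)
qed

lemma nd_lim: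
  assumes "(sg::real) > 0"
  shows "((\<lambda>x. normal_density m sg x) \<longlongrightarrow> 0) at_top"
  unfolding normal_density_def using assms by real_asymp

lemma tail_F_deriv:
  assumes "(sg::real) > 0" "z \<noteq> m"
  shows "DERIV (\<lambda>x. - (sg\<^sup>2 * normal_density m sg x / (z - m))) x :> (x - m) / (z - m) * normal_density m sg x"
proof -
  have dd: "DERIV (\<lambda>x. (-(sg\<^sup>2/(z - m))) * normal_density m sg x) x :> (-(sg\<^sup>2/(z - m))) * (- (x - m) / sg\<^sup>2 * normal_density m sg x)"
    by (rule DERIV_cmult[OF nd_deriv[OF assms(1)]])
  have fe: "(\<lambda>x. - (sg\<^sup>2 * normal_density m sg x / (z - m))) = (\<lambda>x. (-(sg\<^sup>2/(z - m))) * normal_density m sg x)"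
    by (auto simp: fun_eq_iff)
  have ve: "(-(sg\<^sup>2/(z - m))) * (- (x - m) / sg\<^sup>2 * normal_density m sg x) = (x - m) / (z - m) * normal_density m sg x"
    using assms by (simp add: field_simps)
  show ?thesis unfolding fe by (rule DERIV_cong[OF dd ve])
qed

lemma nd_meas_Ico:
  assumes "sg > 0" "a \<le> b" "0 \<le> c" "\<And>x. a \<le> x \<Longrightarrow> x < b \<Longrightarrow> c \<le> normal_density m sg x"
  shows "c * (b - a) \<le> measure (density lborel (normal_density m sg)) {a..<b}"
proof -
  interpret P: prob_space "density lborel (normal_density m sg)" using assms by (simp add: prob_space_normal_density)
  have "ennreal (c * (b - a)) = (\<integral>\<^sup>+x. ennreal c * indicator {a..<b} x \<partial>lborel)"
    using assms by (simp add: nn_integral_cmult_indicator ennreal_mult)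
  also have "\<dots> \<le> (\<integral>\<^sup>+x. ennreal (normal_density m sg x) * indicator {a..<b} x \<partial>lborel)"
    using assms(4) by (intro nn_integral_mono) (auto split: split_indicator intro: ennreal_leI)
  also have "\<dots> = emeasure (density lborel (normal_density m sg)) {a..<b}"
    by (simp add: emeasure_density)
  also have "\<dots> = ennreal (measure (density lborel (normal_density m sg)) {a..<b})"
    by (simp add: P.emeasure_eq_measure)
  finally show ?thesis by (simp add: ennreal_le_iff)
qed

lemma nd_tail_upper:
  assumes "(sg::real) > 0" "z > m"
  shows "measure (density lborel (normal_density m sg)) {z..} \<le> sg\<^sup>2 * normal_density m sg z / (z - m)"
proof -
  interpret P: prob_space "density lborel (normal_density m sg)" using assms by (simp add: prob_space_normal_density)
  let ?F = "\<lambda>x. - (sg\<^sup>2 * normal_density m sg x / (z - m))"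
  have "ennreal (measure (density lborel (normal_density m sg)) {z..})
      = emeasure (density lborel (normal_density m sg)) {z..}"
    by (simp add: P.emeasure_eq_measure)
  also have "\<dots> = (\<integral>\<^sup>+x. ennreal (normal_density m sg x) * indicator {z..} x \<partial>lborel)"
    by (simp add: emeasure_density)
  also have "\<dots> \<le> (\<integral>\<^sup>+x. ennreal ((x - m) / (z - m) * normal_density m sg x) * indicator {z..} x \<partial>lborel)"
  proof (intro nn_integral_mono)
    fix x
    show "ennreal (normal_density m sg x) * indicator {z..} x
         \<le> ennreal ((x - m) / (z - m) * normal_density m sg x) * indicator {z..} x"
    proof (cases "z \<le> x")
      case True
      then have "1 \<le> (x - m) / (z - m)" using assms by simp
      then have "normal_density m sg x \<le> (x - m) / (z - m) * normal_density m sg x"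
        using mult_right_mono[of 1 "(x - m) / (z - m)" "normal_density m sg x"] by simp
      then show ?thesis using True by (auto intro: ennreal_leI)
    qed simp
  qed
  also have "\<dots> = ennreal (0 - ?F z)"
  proof (rule nn_integral_FTC_atLeast[where F = ?F and T = 0])
    show "(\<lambda>x. (x - m) / (z - m) * normal_density m sg x) \<in> borel_measurable borel" by measurable
    show "\<And>x. z \<le> x \<Longrightarrow> DERIV ?F x :> (x - m) / (z - m) * normal_density m sg x"
      using tail_F_deriv[OF assms(1)] assms by auto
    show "\<And>x. z \<le> x \<Longrightarrow> 0 \<le> (x - m) / (z - m) * normal_density m sg x" using assms by simp
    show "(?F \<longlongrightarrow> 0) at_top"
      using tendsto_minus[OF tendsto_divide[OF tendsto_mult[OF tendsto_const nd_lim[OF assms(1)]] tendsto_const, of "z - m" "sg\<^sup>2"]] assms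
      by simp
  qed
  finally show ?thesis
    using assms by (simp add: ennreal_le_iff normal_density_nonneg)
qed




lemma nd_sym: "normal_density m sg (2 * m - x) = normal_density m sg x"
  unfolding normal_density_def by (simp add: power2_commute)

lemma nd_lower_tail:
  assumes "(sg::real) > 0" "z < m"
  shows "1 - measure (density lborel (normal_density m sg)) {z..} \<le> sg\<^sup>2 * normal_density m sg z / (m - z)"
proof -
  let ?N = "density lborel (normal_density m sg)"
  interpret P: prob_space ?N using assms by (simp add: prob_space_normal_density)
  have "measure ?N (space ?N - {z..}) = 1 - measure ?N {z..}"
    by (rule P.prob_compl) simp
  moreover have "space ?N - {z..} = {..<z}" by auto
  ultimately have "1 - measure ?N {z..} = measure ?N {..<z}" by simp
  also have "\<dots> \<le> measure ?N {..z}" by (rule P.finite_measure_mono) auto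
  also have "measure ?N {..z} = measure ?N {2 * m - z..}"
  proof -
    have "emeasure ?N {..z} = (\<integral>\<^sup>+x. ennreal (normal_density m sg x) * indicator {..z} x \<partial>lborel)"
      by (simp add: emeasure_density)
    also have "\<dots> = (\<integral>\<^sup>+x. ennreal (normal_density m sg (2 * m + (-1) * x)) * indicator {..z} (2 * m + (-1) * x) \<partial>lborel)"
      using nn_integral_real_affine[of "\<lambda>x. ennreal (normal_density m sg x) * indicator {..z} x" "-1" "2 * m"]
      by simp
    also have "\<dots> = (\<integral>\<^sup>+x. ennreal (normal_density m sg x) * indicator {2 * m - z..} x \<partial>lborel)"
      using nd_sym by (auto intro!: nn_integral_cong split: split_indicator)
    also have "\<dots> = emeasure ?N {2 * m - z..}"
      by (simp add: emeasure_density)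
    finally show ?thesis by (simp add: P.emeasure_eq_measure)
  qed
  also have "\<dots> \<le> sg\<^sup>2 * normal_density m sg (2 * m - z) / (2 * m - z - m)"
    by (rule nd_tail_upper) (use assms in auto)
  also have "\<dots> = sg\<^sup>2 * normal_density m sg z / (m - z)"
    by (simp add: nd_sym)
  finally show ?thesis .
qed

lemma nd_meas_compl:
  assumes "(sg::real) > 0" "b \<le> z"
  shows "measure (density lborel (normal_density m sg)) {z..} + measure (density lborel (normal_density m sg)) {a..<b} \<le> 1"
proof -
  let ?N = "density lborel (normal_density m sg)"
  interpret P: prob_space ?N using assms by (simp add: prob_space_normal_density)
  have "measure ?N ({z..} \<union> {a..<b}) = measure ?N {z..} + measure ?N {a..<b}"
    by (rule P.finite_measure_Union) (use assms in auto)
  moreover have "measure ?N ({z..} \<union> {a..<b}) \<le> 1" by (rule P.prob_le_1)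
  ultimately show ?thesis by simp
qed




lemma G_lower:
  assumes "sg > 0" "z \<le> a" "a \<le> b" "0 \<le> c" "\<And>x. a \<le> x \<Longrightarrow> x < b \<Longrightarrow> c \<le> normal_density m sg x"
  shows "c * (b - a) \<le> measure (density lborel (normal_density m sg)) {z..}"
proof -
  interpret P: prob_space "density lborel (normal_density m sg)" using assms by (simp add: prob_space_normal_density)
  have "c * (b - a) \<le> measure (density lborel (normal_density m sg)) {a..<b}"
    by (rule nd_meas_Ico) (use assms in auto)
  also have "\<dots> \<le> measure (density lborel (normal_density m sg)) {z..}"
    by (rule P.finite_measure_mono) (use assms in auto)
  finally show ?thesis .
qed

lemma Q_upper:
  assumes "b \<le> z" "a \<le> b" "0 \<le> c" "\<And>x. a \<le> x \<Longrightarrow> x < b \<Longrightarrow> c \<le> std_normal_density x"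
  shows "measure (density lborel std_normal_density) {z..} \<le> 1 - c * (b - a)"
proof -
  have "c * (b - a) \<le> measure (density lborel std_normal_density) {a..<b}"
    by (rule nd_meas_Ico) (use assms in auto)
  moreover have "measure (density lborel std_normal_density) {z..} + measure (density lborel std_normal_density) {a..<b} \<le> 1"
    by (rule nd_meas_compl) (use assms in auto)
  ultimately show ?thesis by linarith
qed

lemma pow_exp_bound:
  assumes "0 \<le> q" "q \<le> 1 - p"
  shows "q ^ n \<le> exp (- (real n * p))"
proof -
  have "q \<le> exp (-p)" using assms exp_ge_add_one_self[of "-p"] by linarith
  then have "q ^ n \<le> exp (-p) ^ n" using assms by (intro power_mono) auto
  also have "\<dots> = exp (- (real n * p))" by (simp add: exp_of_nat_mult[symmetric])
  finally show ?thesis .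
qed

lemma std_nd_neg: "std_normal_density (-x) = std_normal_density x"
  unfolding std_normal_density_def by simp

lemma main_ineq:
  fixes n :: nat and m s z :: real
  assumes m0: "0 \<le> m" and s0: "0 < s" and s1: "s < 1" and n1: "1 \<le> n"
    and hA: "real n * std_normal_density (m + 2) \<ge> ((m + 1) / s + 1)\<^sup>2 / 2 + 4"
    and hB: "(m + 1)\<^sup>2 \<le> (1 - s\<^sup>2) * (2 * ln (real n) - 2 * ln 2)"
    and hC: "real n \<ge> ((m + 1) / s + 1)\<^sup>2 + 8"
  shows "measure (density lborel std_normal_density) {z..} ^ n
       \<le> measure (density lborel (normal_density (-m) s)) {z..}"
proof -
  define K where "K = (m + 1) / s + 1"
  define Q where "Q = measure (density lborel std_normal_density) {z..}"
  define G where "G = measure (density lborel (normal_density (-m) s)) {z..}"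
  have Q0: "0 \<le> Q" unfolding Q_def by simp
  have K1: "1 \<le> K" unfolding K_def using m0 s0 by simp
  have ndx: "normal_density (-m) s x = std_normal_density ((x + m) / s) / s" for x
    using nd_scale[OF s0] by simp
  consider (L) "z < -m - s" | (M) "-m - s \<le> z" "z \<le> 1" | (R) "1 < z" by linarith
  then have "Q ^ n \<le> G"
  proof cases
    case M
    have "Q \<le> 1 - std_normal_density (m + 2) * (z - (z - 1))"
      unfolding Q_def
    proof (rule Q_upper)
      fix x assume "z - 1 \<le> x" "x < z"
      then have "\<bar>x\<bar> \<le> \<bar>m + 2\<bar>" using M m0 s1 by auto
      then show "std_normal_density (m + 2) \<le> std_normal_density x" by (rule std_nd_anti)
    qed auto
    then have "Q ^ n \<le> exp (- (real n * std_normal_density (m + 2)))"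
      using Q0 by (intro pow_exp_bound) auto
    also have "\<dots> \<le> std_normal_density K"
      by (rule exp_le_std_nd) (use hA in \<open>simp add: K_def\<close>)
    also have "\<dots> = std_normal_density K / s * (max z (-m) + s - max z (-m))"
      using s0 by simp
    also have "\<dots> \<le> G"
      unfolding G_def
    proof (rule G_lower)
      fix x assume x: "max z (- m) \<le> x" "x < max z (- m) + s"
      have "0 \<le> (x + m) / s" using x s0 by simp
      moreover have "(x + m) / s \<le> K"
      proof -
        have "x + m \<le> (1 + m) + s" using x M m0 by auto
        then have "(x + m) / s \<le> ((1 + m) + s) / s" using s0 by (simp add: divide_right_mono)
        also have "\<dots> = K" unfolding K_def using s0 by (simp add: field_simps)
        finally show ?thesis .
      qed
      ultimately have "\<bar>(x + m) / s\<bar> \<le> \<bar>K\<bar>" using K1 by simp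
      then have "std_normal_density K \<le> std_normal_density ((x + m) / s)" by (rule std_nd_anti)
      then show "std_normal_density K / s \<le> normal_density (- m) s x"
        unfolding ndx using s0 by (simp add: divide_right_mono)
    qed (use s0 in auto)
    finally show ?thesis .
  next
    case R
    have "Q \<le> 1\<^sup>2 * std_normal_density z / (z - 0)"
      unfolding Q_def by (rule nd_tail_upper) (use R in auto)
    also have "\<dots> \<le> std_normal_density z"
      using R mult_right_mono[of 1 z "std_normal_density z"] by (simp add: divide_le_eq mult.commute)
    also have "\<dots> \<le> exp (- z\<^sup>2 / 2)" by (rule std_nd_le)
    finally have Qz: "Q \<le> exp (- z\<^sup>2 / 2)" .
    have "Q ^ n \<le> exp (- z\<^sup>2 / 2) ^ n" using Qz Q0 by (intro power_mono) auto
    also have "\<dots> = exp (- (real n * z\<^sup>2 / 2))" by (simp add: exp_of_nat_mult[symmetric])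
    also have "\<dots> \<le> std_normal_density (z * K)"
    proof (rule exp_le_std_nd)
      have z2: "1 \<le> z\<^sup>2" using R by (simp add: one_le_power)
      have "real n * z\<^sup>2 \<ge> (K\<^sup>2 + 8) * z\<^sup>2" using hC z2 unfolding K_def
        by (intro mult_right_mono) auto
      then show "real n * z\<^sup>2 / 2 \<ge> (z * K)\<^sup>2 / 2 + 4" using z2
        by (simp add: power_mult_distrib algebra_simps)
    qed
    also have "\<dots> = std_normal_density (z * K) / s * (z + s - z)"
      using s0 by simp
    also have "\<dots> \<le> G"
      unfolding G_def
    proof (rule G_lower)
      fix x assume x: "z \<le> x" "x < z + s"
      have "0 \<le> (x + m) / s" using x s0 R m0 by simp
      moreover have "(x + m) / s \<le> z * K"
      proof -
        have f1: "1 * m \<le> z * m" using R m0 by (intro mult_right_mono) auto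
        have f2: "1 * s \<le> z * s" using R s0 by (intro mult_right_mono) auto
        have f3: "z * (1 + m) = z + z * m" by (simp add: algebra_simps)
        have "x + m \<le> z * (1 + m) + z * s" using x R f1 f2 f3 by linarith
        then have "(x + m) / s \<le> (z * (1 + m) + z * s) / s" using s0 by (simp add: divide_right_mono)
        also have "\<dots> = z * K" unfolding K_def using s0 by (simp add: field_simps)
        finally show ?thesis .
      qed
      ultimately have "\<bar>(x + m) / s\<bar> \<le> \<bar>z * K\<bar>" using K1 R by simp
      then have "std_normal_density (z * K) \<le> std_normal_density ((x + m) / s)" by (rule std_nd_anti)
      then show "std_normal_density (z * K) / s \<le> normal_density (- m) s x"
        unfolding ndx using s0 by (simp add: divide_right_mono)
    qed (use s0 in auto)
    finally show ?thesis .
  next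
    case L
    define t where "t = (-m - z) / s"
    have t1: "1 < t" unfolding t_def using L s0 by (simp add: field_simps)
    have zt: "z = -m - s * t" unfolding t_def using s0 by simp
    have "1 - G \<le> s\<^sup>2 * normal_density (-m) s z / (-m - z)"
      unfolding G_def by (rule nd_lower_tail) (use L s0 in auto)
    also have "\<dots> = std_normal_density t / t"
    proof -
      have "(z + m) / s = -t" unfolding zt using s0 by simp
      then have "normal_density (-m) s z = std_normal_density t / s"
        unfolding ndx by (simp add: std_nd_neg)
      then show ?thesis unfolding zt using s0 t1 by (simp add: field_simps power2_eq_square)
    qed
    also have "\<dots> \<le> std_normal_density t"
      using t1 mult_right_mono[of 1 t "std_normal_density t"] by (simp add: divide_le_eq mult.commute)
    finally have G1: "1 - std_normal_density t \<le> G" by simp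
    define p where "p = std_normal_density (1 - z)"
    have p0: "0 \<le> p" unfolding p_def by simp
    have "Q \<le> 1 - p * (z - (z - 1))"
      unfolding Q_def
    proof (rule Q_upper)
      fix x assume "z - 1 \<le> x" "x < z"
      then have "\<bar>x\<bar> \<le> \<bar>1 - z\<bar>" using L m0 s0 by auto
      then show "p \<le> std_normal_density x" unfolding p_def by (rule std_nd_anti)
    qed (auto simp: p_def)
    then have "Q ^ n \<le> exp (- (real n * p))"
      using Q0 by (intro pow_exp_bound) auto
    also have "\<dots> \<le> 1 / (1 + real n * p)"
    proof -
      have "1 + real n * p \<le> exp (real n * p)" by (rule exp_ge_add_one_self)
      moreover have "exp (- (real n * p)) = 1 / exp (real n * p)" by (simp add: exp_minus inverse_eq_divide)
      ultimately show ?thesis using p0 by (simp add: divide_left_mono add_pos_nonneg)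
    qed
    also have "\<dots> \<le> 1 - std_normal_density t"
    proof -
      have key: "2 * std_normal_density t \<le> real n * p"
      proof -
        have A: "0 < 1 - s\<^sup>2" using s0 s1 by (simp add: power_less_one_iff abs_less_iff)
        have iden: "(1 - s\<^sup>2) * ((m + 1 + s * t)\<^sup>2 - t\<^sup>2) - (m + 1)\<^sup>2 = - (s * (m + 1) - (1 - s\<^sup>2) * t)\<^sup>2"
          by (simp add: power2_eq_square algebra_simps)
        have "(1 - s\<^sup>2) * ((m + 1 + s * t)\<^sup>2 - t\<^sup>2) \<le> (1 - s\<^sup>2) * (2 * ln (real n) - 2 * ln 2)"
          using iden hB zero_le_power2[of "s * (m + 1) - (1 - s\<^sup>2) * t"] by linarith
        then have q: "(m + 1 + s * t)\<^sup>2 - t\<^sup>2 \<le> 2 * ln (real n) - 2 * ln 2"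
          using A by simp
        have n0: "0 < real n" using n1 by simp
        have "2 * exp (- t\<^sup>2 / 2) = exp (ln 2 - t\<^sup>2 / 2)"
        proof -
          have "exp (ln 2 - t\<^sup>2 / 2) = 2 / exp (t\<^sup>2 / 2)" by (simp add: exp_diff)
          moreover have "exp (- t\<^sup>2 / 2) = 1 / exp (t\<^sup>2 / 2)" by (simp add: exp_minus inverse_eq_divide)
          ultimately show ?thesis by simp
        qed
        also have "\<dots> \<le> exp (ln (real n) - (m + 1 + s * t)\<^sup>2 / 2)" using q by simp
        also have "\<dots> = real n * exp (- (1 - z)\<^sup>2 / 2)"
        proof -
          have e1: "(1 - z)\<^sup>2 = (m + 1 + s * t)\<^sup>2" unfolding zt by (simp add: algebra_simps)
          have "exp (ln (real n) - (m + 1 + s * t)\<^sup>2 / 2) = real n / exp ((m + 1 + s * t)\<^sup>2 / 2)"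
            using n0 by (simp add: exp_diff)
          moreover have "exp (- (m + 1 + s * t)\<^sup>2 / 2) = 1 / exp ((m + 1 + s * t)\<^sup>2 / 2)" by (simp add: exp_minus inverse_eq_divide)
          ultimately show ?thesis unfolding e1 by simp
        qed
        finally have "2 * exp (- t\<^sup>2 / 2) \<le> real n * exp (- (1 - z)\<^sup>2 / 2)" .
        then show ?thesis unfolding p_def std_normal_density_def
          by (simp add: divide_right_mono field_simps)
      qed
      have h: "std_normal_density t \<le> 1/2" by (rule std_nd_half)
      have "0 \<le> std_normal_density t" by simp
      have np0: "0 \<le> real n * p" using p0 by simp
      have "std_normal_density t * (real n * p) \<le> 1/2 * (real n * p)"
        by (rule mult_right_mono) (use h np0 in auto)
      moreover have "std_normal_density t * (1 + real n * p) = std_normal_density t + std_normal_density t * (real n * p)"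
        by (simp add: algebra_simps)
      ultimately have "std_normal_density t * (1 + real n * p) \<le> real n * p"
        using key by linarith
      moreover have e: "(1 - std_normal_density t) * (1 + real n * p) = 1 + real n * p - std_normal_density t * (1 + real n * p)"
        by (simp add: algebra_simps)
      ultimately have "1 \<le> (1 - std_normal_density t) * (1 + real n * p)" by linarith
      moreover have pos: "0 < 1 + real n * p" using np0 by simp
      ultimately show ?thesis by (simp add: divide_le_eq)
    qed
    also have "\<dots> \<le> G" by (rule G1)
    finally show ?thesis .
  qed
  then show ?thesis unfolding Q_def G_def .
qed




lemma min_prob:
  fixes M :: "'a measure" and X :: "nat \<Rightarrow> 'a \<Rightarrow> real"
  assumes PS: "prob_space M" and I: "prob_space.indep_vars M (\<lambda>_. borel) X {..<n}"
    and D: "\<forall>i<n. distributed M lborel (X i) (normal_density 0 1)" and n1: "1 \<le> n"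
  shows "measure M {\<omega> \<in> space M. z \<le> Min ((\<lambda>i. X i \<omega>) ` {..<n})}
       = measure (density lborel std_normal_density) {z..} ^ n"
proof -
  interpret prob_space M by (rule PS)
  have ne: "{..<n} \<noteq> {}" using n1 by (auto simp: lessThan_empty_iff)
  have "{\<omega> \<in> space M. z \<le> Min ((\<lambda>i. X i \<omega>) ` {..<n})} = (\<Inter>i\<in>{..<n}. X i -` {z..} \<inter> space M)"
    using ne by auto
  then have "measure M {\<omega> \<in> space M. z \<le> Min ((\<lambda>i. X i \<omega>) ` {..<n})}
      = (\<Prod>i\<in>{..<n}. prob (X i -` {z..} \<inter> space M))"
    using indep_varsD_finite[OF I ne] by simp
  also have "\<dots> = (\<Prod>i\<in>{..<n}. measure (density lborel std_normal_density) {z..})"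
  proof (rule prod.cong)
    fix i assume "i \<in> {..<n}"
    then have Di: "distributed M lborel (X i) (normal_density 0 1)" using D by auto
    have "prob (X i -` {z..} \<inter> space M) = measure (distr M lborel (X i)) {z..}"
      by (rule measure_distr[symmetric]) (use distributed_measurable[OF Di] in auto)
    also have "\<dots> = measure (density lborel std_normal_density) {z..}"
      unfolding distributed_distr_eq_density[OF Di] by simp
    finally show "prob (X i -` {z..} \<inter> space M) = measure (density lborel std_normal_density) {z..}" .
  qed simp
  also have "\<dots> = measure (density lborel std_normal_density) {z..} ^ n" by simp
  finally show ?thesis .
qed




lemma tan_gt_self:
  fixes x :: real
  assumes "0 < x" "x < pi/2"
  shows "x < tan x"
proof -
  have "DERIV tan x' :> inverse ((cos x')\<^sup>2)" if "0 \<le> x'" "x' \<le> x" for x'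
  proof -
    have "cos x' \<noteq> 0" using that assms cos_gt_zero_pi[of x'] by auto
    then show ?thesis by (rule DERIV_tan)
  qed
  from MVT2[OF \<open>0 < x\<close> this]
  obtain z where z: "0 < z" "z < x" and tan_diff: "tan x - tan 0 = (x - 0) * inverse ((cos z)\<^sup>2)" by auto
  have c0: "0 < cos z" using z assms cos_gt_zero_pi[of z] by auto
  have "0 < sin z" using z assms by (intro sin_gt_zero) auto
  then have "0 < (sin z)\<^sup>2" by simp
  then have "(cos z)\<^sup>2 < 1" using sin_cos_squared_add[of z] by linarith
  then have "1 < inverse ((cos z)\<^sup>2)" using c0 by (simp add: one_less_inverse)
  then have "x * 1 < x * inverse ((cos z)\<^sup>2)" using assms by (intro mult_strict_left_mono) auto
  then show ?thesis using tan_diff by simp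
qed

lemma c1_bounds: assumes "0 < \<theta>" "\<theta> < pi/2" shows "0 < c1 \<theta>" "c1 \<theta> < 1/2"
  using assms pi_gt_zero unfolding c1_def by (auto simp: field_simps)

lemma c2_bound: assumes "0 < \<theta>" "\<theta> < pi/2" shows "1/2 < c2 \<theta>"
proof -
  define x where "x = pi/2 - \<theta>"
  have x: "0 < x" "x < pi/2" using assms unfolding x_def by auto
  have "cot \<theta> = tan x" unfolding x_def by (simp add: tan_cot')
  moreover have "pi - 2 * \<theta> = 2 * x" unfolding x_def by simp
  ultimately have "c2 \<theta> = tan x / (2 * x)" unfolding c2_def by simp
  then have eq: "tan x = x * (2 * c2 \<theta>)" using x by (simp add: field_simps)
  have "x * 1 < x * (2 * c2 \<theta>)" using tan_gt_self[OF x] eq by simp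
  then have "1 < 2 * c2 \<theta>" using mult_less_cancel_left_pos[of x 1 "2 * c2 \<theta>"] x by simp
  then show ?thesis by simp
qed

lemma lnln2: "ln (ln (2::real)) < 0"
  using ln_2_less_1 by (simp add: ln_less_zero)

lemma conds_eventually:
  fixes a b k l :: real
  assumes a0: "0 < a" and a2: "a < 2" and b0: "0 < b"
  shows "eventually (\<lambda>u. 0 \<le> u \<and> 0 \<le> u + k \<and> 0 < u + k - l
      \<and> 0 < sqrt (b / (u + k - l)) \<and> sqrt (b / (u + k - l)) < 1
      \<and> exp u * std_normal_density (sqrt (a * (u + k)) + 2)
          \<ge> ((sqrt (a * (u + k)) + 1) / sqrt (b / (u + k - l)) + 1)\<^sup>2 / 2 + 4
      \<and> (sqrt (a * (u + k)) + 1)\<^sup>2 \<le> (1 - (sqrt (b / (u + k - l)))\<^sup>2) * (2 * u - 2 * ln 2)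
      \<and> exp u \<ge> ((sqrt (a * (u + k)) + 1) / sqrt (b / (u + k - l)) + 1)\<^sup>2 + 8) at_top"
proof -
  define d where "d = 2 - a"
  have d0: "0 < d" and d2: "d < 2" using a0 a2 unfolding d_def by auto
  define C where "C = (1 + d/4) * a * \<bar>k\<bar> + 4 + 16 / d"
  have C0: "0 \<le> C" unfolding C_def using a0 d0 by simp
  have ev1: "eventually (\<lambda>u. max (max 0 (-k)) (l - k + 1) \<le> u \<and> 4 * (C + 2) / d \<le> u \<and> ln 2 \<le> u) at_top"
    by (intro eventually_conj eventually_ge_at_top)
  have ev2: "eventually (\<lambda>u. b / (u + k - l) \<le> d / 8) at_top"
    using b0 d0 by real_asymp
  have ev3: "eventually (\<lambda>u. ((sqrt (a * (u + k)) + 1) / sqrt (b / (u + k - l)) + 1)\<^sup>2 / 2 + 4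
              \<le> exp (d * u / 4 - C / 2) / sqrt (2 * pi)) at_top"
    using a0 b0 d0 by real_asymp
  have ev4: "eventually (\<lambda>u. ((sqrt (a * (u + k)) + 1) / sqrt (b / (u + k - l)) + 1)\<^sup>2 + 8 \<le> exp u) at_top"
    using a0 b0 by real_asymp
  show ?thesis
  proof (rule eventually_mono[OF eventually_conj[OF ev1 eventually_conj[OF ev2 eventually_conj[OF ev3 ev4]]]])
    fix u assume H: "(max (max 0 (-k)) (l - k + 1) \<le> u \<and> 4 * (C + 2) / d \<le> u \<and> ln 2 \<le> u) \<and>
      b / (u + k - l) \<le> d / 8 \<and>
      ((sqrt (a * (u + k)) + 1) / sqrt (b / (u + k - l)) + 1)\<^sup>2 / 2 + 4 \<le> exp (d * u / 4 - C / 2) / sqrt (2 * pi) \<and>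
      ((sqrt (a * (u + k)) + 1) / sqrt (b / (u + k - l)) + 1)\<^sup>2 + 8 \<le> exp u"
    define m where "m = sqrt (a * (u + k))"
    define s where "s = sqrt (b / (u + k - l))"
    have u0: "0 \<le> u" "0 \<le> u + k" "0 < u + k - l" using H by auto
    have au: "0 \<le> a * (u + k)" using a0 u0 by (intro mult_nonneg_nonneg) auto
    have m0: "0 \<le> m" unfolding m_def using au by simp
    have m2: "m\<^sup>2 = a * (u + k)" unfolding m_def using au by simp
    have s2: "s\<^sup>2 = b / (u + k - l)" unfolding s_def using b0 u0 by simp
    have s0: "0 < s" unfolding s_def using b0 u0 by simp
    have s2d: "s\<^sup>2 \<le> d / 8" using s2 H by simp
    have s1: "s < 1"
    proof -
      have "s\<^sup>2 < 1\<^sup>2" using s2d d2 by simp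
      then show ?thesis using s0 power_less_imp_less_base by fastforce
    qed
    have am: "(1 + d/4) * m\<^sup>2 \<le> (2 - d/2) * u + (1 + d/4) * a * \<bar>k\<bar>"
    proof -
      have "(1 + d/4) * m\<^sup>2 = (1 + d/4) * a * u + (1 + d/4) * a * k" unfolding m2 by (simp add: algebra_simps)
      also have "(1 + d/4) * a * u \<le> (2 - d/2) * u"
      proof -
        have "(1 + d/4) * a = 2 - d/2 - d\<^sup>2/4" unfolding d_def power2_eq_square by (simp add: field_simps)
        then show ?thesis using u0 by (simp add: mult_right_mono)
      qed
      also have "(1 + d/4) * a * k \<le> (1 + d/4) * a * \<bar>k\<bar>" using a0 d0 by (intro mult_left_mono) auto
      finally show ?thesis by simp
    qed
    have mp2: "(m + 2)\<^sup>2 \<le> (2 - d/2) * u + C"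
    proof -
      have "0 \<le> (d/4) * (m - 8/d)\<^sup>2" using d0 by simp
      also have "(d/4) * (m - 8/d)\<^sup>2 = (d/4) * m\<^sup>2 - 4 * m + 16 / d" using d0
        by (simp add: power2_eq_square field_simps)
      finally have "4 * m \<le> (d/4) * m\<^sup>2 + 16/d" by simp
      then have "(m + 2)\<^sup>2 \<le> (1 + d/4) * m\<^sup>2 + 4 + 16/d" by (simp add: power2_eq_square algebra_simps)
      then show ?thesis using am unfolding C_def by simp
    qed
    have mp1: "(m + 1)\<^sup>2 \<le> (2 - d/2) * u + C"
    proof -
      have "0 \<le> (d/4) * (m - 4/d)\<^sup>2" using d0 by simp
      also have "(d/4) * (m - 4/d)\<^sup>2 = (d/4) * m\<^sup>2 - 2 * m + 4 / d" using d0
        by (simp add: power2_eq_square field_simps)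
      finally have "2 * m \<le> (d/4) * m\<^sup>2 + 4/d" by simp
      then have "(m + 1)\<^sup>2 \<le> (1 + d/4) * m\<^sup>2 + 1 + 4/d" by (simp add: power2_eq_square algebra_simps)
      moreover have "1 + 4/d \<le> 4 + 16/d" using d0 by (simp add: field_simps)
      ultimately show ?thesis using am unfolding C_def by simp
    qed
    have A: "exp u * std_normal_density (m + 2) \<ge> ((m + 1) / s + 1)\<^sup>2 / 2 + 4"
    proof -
      have f: "(2 - d/2) * u = 2 * u - d * u / 2" by (simp add: algebra_simps)
      have "exp (d * u / 4 - C / 2) \<le> exp (u - (m + 2)\<^sup>2 / 2)" using mp2 f by simp
      also have "exp (u - (m + 2)\<^sup>2 / 2) = exp u * exp (- (m + 2)\<^sup>2 / 2)"
        by (simp add: exp_add[symmetric])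
      finally have "exp (d * u / 4 - C / 2) / sqrt (2 * pi) \<le> exp u * std_normal_density (m + 2)"
        unfolding std_normal_density_def by (simp add: divide_right_mono)
      then show ?thesis using H unfolding m_def s_def by linarith
    qed
    have B: "(m + 1)\<^sup>2 \<le> (1 - s\<^sup>2) * (2 * u - 2 * ln 2)"
    proof -
      have l2: "ln (2::real) \<le> 1" using ln_2_less_1 by simp
      have l20: "0 \<le> ln (2::real)" by simp
      have "(1 - d/8) * (2 * u - 2 * ln 2) \<le> (1 - s\<^sup>2) * (2 * u - 2 * ln 2)"
        using s2d H by (intro mult_right_mono) auto
      moreover have "(2 - d/4) * u - 2 \<le> (1 - d/8) * (2 * u - 2 * ln 2)"
      proof -
        have "(1 - d/8) * (2 * ln 2) \<le> 1 * 2" using l2 l20 d0 by (intro mult_mono) auto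
        then show ?thesis by (simp add: algebra_simps)
      qed
      moreover have "(2 - d/2) * u + C \<le> (2 - d/4) * u - 2"
      proof -
        have "4 * (C + 2) / d \<le> u" using H by simp
        then have "4 * (C + 2) \<le> u * d" using d0 by (simp add: divide_le_eq)
        then show ?thesis by (simp add: algebra_simps)
      qed
      ultimately show ?thesis using mp1 by linarith
    qed
    show "0 \<le> u \<and> 0 \<le> u + k \<and> 0 < u + k - l
      \<and> 0 < sqrt (b / (u + k - l)) \<and> sqrt (b / (u + k - l)) < 1
      \<and> exp u * std_normal_density (sqrt (a * (u + k)) + 2)
          \<ge> ((sqrt (a * (u + k)) + 1) / sqrt (b / (u + k - l)) + 1)\<^sup>2 / 2 + 4
      \<and> (sqrt (a * (u + k)) + 1)\<^sup>2 \<le> (1 - (sqrt (b / (u + k - l)))\<^sup>2) * (2 * u - 2 * ln 2)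
      \<and> exp u \<ge> ((sqrt (a * (u + k)) + 1) / sqrt (b / (u + k - l)) + 1)\<^sup>2 + 8"
      using u0 s0 s1 A B H unfolding m_def s_def by auto
  qed
qed




theorem mainTheorem5:
  fixes \<theta> :: real
  assumes "0 < \<theta>" and "\<theta> < pi / 2"
  shows "\<exists>n0::nat. \<forall>n\<ge>n0. \<forall>(M::'a measure) (X::nat \<Rightarrow> 'a \<Rightarrow> real).
    (prob_space M \<and> prob_space.indep_vars M (\<lambda>_. borel) X {..<n}
      \<and> (\<forall>i<n. distributed M lborel (X i) (normal_density 0 1)))
    \<longrightarrow> (\<forall>z::real.
          measure M {\<omega> \<in> space M. z \<le> Min ((\<lambda>i. X i \<omega>) ` {..<n})}
          \<le> measure (density lborel (normal_density (mu_n \<theta> n) (sqrt (sigma2_n \<theta> n)))) {z..})"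
proof -
  define a where "a = 1 / c2 \<theta>"
  define l where "l = ln (ln (2::real))"
  define b where "b = - l / (2 * c2 \<theta>)"
  define k where "k = ln (c1 \<theta>)"
  have c2h: "1/2 < c2 \<theta>" by (rule c2_bound[OF assms])
  have c1h: "0 < c1 \<theta>" by (rule c1_bounds(1)[OF assms])
  have a0: "0 < a" unfolding a_def using c2h by simp
  have a2: "a < 2" unfolding a_def using c2h by (simp add: field_simps)
  have l0: "l < 0" unfolding l_def by (rule lnln2)
  have b0: "0 < b" unfolding b_def using l0 c2h by (simp add: field_simps)
  let ?P = "\<lambda>u. 0 \<le> u \<and> 0 \<le> u + k \<and> 0 < u + k - l
      \<and> 0 < sqrt (b / (u + k - l)) \<and> sqrt (b / (u + k - l)) < 1
      \<and> exp u * std_normal_density (sqrt (a * (u + k)) + 2)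
          \<ge> ((sqrt (a * (u + k)) + 1) / sqrt (b / (u + k - l)) + 1)\<^sup>2 / 2 + 4
      \<and> (sqrt (a * (u + k)) + 1)\<^sup>2 \<le> (1 - (sqrt (b / (u + k - l)))\<^sup>2) * (2 * u - 2 * ln 2)
      \<and> exp u \<ge> ((sqrt (a * (u + k)) + 1) / sqrt (b / (u + k - l)) + 1)\<^sup>2 + 8"
  have ev: "eventually ?P at_top" by (rule conds_eventually[OF a0 a2 b0])
  have "eventually (\<lambda>n::nat. ?P (ln (real n))) sequentially"
    by (rule eventually_compose_filterlim[OF ev filterlim_compose[OF ln_at_top filterlim_real_sequentially]])
  then obtain N where N: "\<And>n. N \<le> n \<Longrightarrow> ?P (ln (real n))" by (auto simp: eventually_sequentially)
  show ?thesis
  proof (intro exI[of _ "max N 1"] allI impI)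
    fix n :: nat and M :: "'a measure" and X :: "nat \<Rightarrow> 'a \<Rightarrow> real" and z :: real
    assume n: "max N 1 \<le> n"
    assume H: "prob_space M \<and> prob_space.indep_vars M (\<lambda>_. borel) X {..<n}
      \<and> (\<forall>i<n. distributed M lborel (X i) (normal_density 0 1))"
    define u where "u = ln (real n)"
    have n1: "1 \<le> n" using n by simp
    have Pu: "?P u" unfolding u_def by (rule N) (use n in simp)
    have eu: "exp u = real n" unfolding u_def using n1 by simp
    define m where "m = sqrt (a * (u + k))"
    define s where "s = sqrt (b / (u + k - l))"
    have lnnc: "ln (real n * c1 \<theta>) = u + k" unfolding u_def k_def using n1 c1h by (simp add: ln_mult)
    have mu: "mu_n \<theta> n = - m"
      unfolding mu_n_def m_def lnnc a_def by simp
    have sg: "sigma2_n \<theta> n = b / (u + k - l)"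
      unfolding sigma2_n_def lnnc b_def l_def[symmetric] by simp
    have m0: "0 \<le> m" unfolding m_def using a0 Pu by simp
    have "measure M {\<omega> \<in> space M. z \<le> Min ((\<lambda>i. X i \<omega>) ` {..<n})}
       = measure (density lborel std_normal_density) {z..} ^ n"
      using H n1 by (intro min_prob) auto
    also have "\<dots> \<le> measure (density lborel (normal_density (-m) s)) {z..}"
    proof (rule main_ineq)
      show "0 \<le> m" by (rule m0)
      show "0 < s" "s < 1" unfolding s_def using Pu by auto
      show "1 \<le> n" by (rule n1)
      show "((m + 1) / s + 1)\<^sup>2 / 2 + 4 \<le> real n * std_normal_density (m + 2)"
        using Pu[unfolded eu] unfolding m_def s_def by blast
      show "(m + 1)\<^sup>2 \<le> (1 - s\<^sup>2) * (2 * ln (real n) - 2 * ln 2)"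
        using Pu unfolding m_def s_def u_def by blast
      show "((m + 1) / s + 1)\<^sup>2 + 8 \<le> real n"
        using Pu[unfolded eu] unfolding m_def s_def by blast
    qed
    also have "\<dots> = measure (density lborel (normal_density (mu_n \<theta> n) (sqrt (sigma2_n \<theta> n)))) {z..}"
      unfolding mu sg s_def ..
    finally show "measure M {\<omega> \<in> space M. z \<le> Min ((\<lambda>i. X i \<omega>) ` {..<n})}
          \<le> measure (density lborel (normal_density (mu_n \<theta> n) (sqrt (sigma2_n \<theta> n)))) {z..}" .
  qed
qed


end
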